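(* Let $\alpha$ and $\beta$ be a Riemannian metric and a 1-form on a two-dimensional manifold with $\beta\ne0$, $b^2<1$ in the upper-sign case and $b^2<1/2$ in the lower-sign case, such that $$r_{ij}=2\tau\{(1\pm2b^2)a_{ij}\mp3b_ib_j\}+\frac{3}{\pm1-b^2}(b_is_j+b_js_i)$$ for a scalar function $\tau$. Define $\tilde\alpha=\sqrt{\xi\alpha^2+\eta\beta^2}$ and $\tilde\beta=\beta$, where $$\xi=\frac{(1\mp b^2)^3}{(1\pm2b^2)^{3/2}},\qquad \eta=\frac{9}{8b^2}\Big\{(1\pm2b^2)^{3/2}-\frac{1\mp2b^2+4b^4}{(1\pm2b^2)^{3/2}}\Big\}.$$ Then $\tilde r_{ij}=\dfrac{2\tau(1\mp b^2)^2}{(1\pm2b^2)^{5/2}}\,\tilde a_{ij}$, where $\tilde a_{ij}$ are the coefficients of $\tilde\alpha^2$ and $\tilde r_{ij}$ is the symmetrized covariant derivative of $\beta$ with respect to $\tilde\alpha$; moreover $\|\beta\|_{\tilde\alpha}^2=\dfrac{b^2}{(1\pm2b^2)^{3/2}}$.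
   Context: For $\alpha=\sqrt{a_{ij}y^iy^j}$ and $\beta=b_iy^i$: $b^i=a^{ij}b_j$, $b=\|\beta\|_\alpha=\sqrt{a^{ij}b_ib_j}$; $b_{i|j}$ is the covariant derivative of $\beta$ w.r.t. the Levi-Civita connection of $\alpha$, $r_{ij}=\frac12(b_{i|j}+b_{j|i})$, $s_{ij}=\frac12(b_{i|j}-b_{j|i})$, $s_j=b^is_{ij}$. Analogous quantities with tildes are taken with respect to $\tilde\alpha$. Upper signs refer to one case and lower signs to the other throughout. *)

theory Defs
  imports "HOL-Analysis.Analysis"
begin

text \<open>Local coordinate description on an open chart U of the plane.
  A metric alpha is given by its coefficient matrix field A (a_ij), a 1-form beta
  by its component field b (b_i).\<close>

definition pd :: "(real^2 \<Rightarrow> real) \<Rightarrow> 2 \<Rightarrow> real^2 \<Rightarrow> real" where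
  "pd f k x = deriv (\<lambda>t. f (x + t *\<^sub>R axis k 1)) 0"

definition riemannian_on :: "(real^2) set \<Rightarrow> (real^2 \<Rightarrow> real^2^2) \<Rightarrow> bool" where
  "riemannian_on U A \<longleftrightarrow>
     (\<forall>x\<in>U. transpose (A x) = A x \<and> (\<forall>v. v \<noteq> 0 \<longrightarrow> v \<bullet> (A x *v v) > 0)) \<and>
     (\<forall>x\<in>U. \<forall>i j. (\<lambda>y. A y $ i $ j) differentiable (at x))"

definition christoffel :: "(real^2 \<Rightarrow> real^2^2) \<Rightarrow> 2 \<Rightarrow> 2 \<Rightarrow> 2 \<Rightarrow> real^2 \<Rightarrow> real" where
  "christoffel A k i j x =
     (\<Sum>l\<in>UNIV. matrix_inv (A x) $ k $ l *
        (pd (\<lambda>y. A y $ l $ j) i x + pd (\<lambda>y. A y $ l $ i) j x - pd (\<lambda>y. A y $ i $ j) l x)) / 2"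

definition covd :: "(real^2 \<Rightarrow> real^2^2) \<Rightarrow> (real^2 \<Rightarrow> real^2) \<Rightarrow> 2 \<Rightarrow> 2 \<Rightarrow> real^2 \<Rightarrow> real" where
  "covd A b i j x = pd (\<lambda>y. b y $ i) j x - (\<Sum>k\<in>UNIV. christoffel A k i j x * b x $ k)"

definition r_tensor :: "(real^2 \<Rightarrow> real^2^2) \<Rightarrow> (real^2 \<Rightarrow> real^2) \<Rightarrow> 2 \<Rightarrow> 2 \<Rightarrow> real^2 \<Rightarrow> real" where
  "r_tensor A b i j x = (covd A b i j x + covd A b j i x) / 2"

definition s_tensor :: "(real^2 \<Rightarrow> real^2^2) \<Rightarrow> (real^2 \<Rightarrow> real^2) \<Rightarrow> 2 \<Rightarrow> 2 \<Rightarrow> real^2 \<Rightarrow> real" where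
  "s_tensor A b i j x = (covd A b i j x - covd A b j i x) / 2"

definition b_up :: "(real^2 \<Rightarrow> real^2^2) \<Rightarrow> (real^2 \<Rightarrow> real^2) \<Rightarrow> real^2 \<Rightarrow> real^2" where
  "b_up A b x = matrix_inv (A x) *v b x"

definition s_vec :: "(real^2 \<Rightarrow> real^2^2) \<Rightarrow> (real^2 \<Rightarrow> real^2) \<Rightarrow> 2 \<Rightarrow> real^2 \<Rightarrow> real" where
  "s_vec A b j x = (\<Sum>i\<in>UNIV. b_up A b x $ i * s_tensor A b i j x)"

definition bsq :: "(real^2 \<Rightarrow> real^2^2) \<Rightarrow> (real^2 \<Rightarrow> real^2) \<Rightarrow> real^2 \<Rightarrow> real" where
  "bsq A b x = b x \<bullet> (matrix_inv (A x) *v b x)"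

text \<open>eps = 1 : upper signs; eps = -1 : lower signs\<close>
definition xi_coef :: "real \<Rightarrow> real \<Rightarrow> real" where
  "xi_coef eps B = (1 - eps * B) ^ 3 / (1 + 2 * eps * B) powr (3/2)"

definition eta_coef :: "real \<Rightarrow> real \<Rightarrow> real" where
  "eta_coef eps B = 9 / (8 * B) *
     ((1 + 2 * eps * B) powr (3/2) - (1 - 2 * eps * B + 4 * B ^ 2) / (1 + 2 * eps * B) powr (3/2))"

definition tilde_metric :: "real \<Rightarrow> (real^2 \<Rightarrow> real^2^2) \<Rightarrow> (real^2 \<Rightarrow> real^2) \<Rightarrow> real^2 \<Rightarrow> real^2^2" where
  "tilde_metric eps A b y =
     xi_coef eps (bsq A b y) *\<^sub>R A y +
     eta_coef eps (bsq A b y) *\<^sub>R (\<chi> i j. b y $ i * b y $ j)"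

end

theory Submission
  imports Defs
begin


lemma minv:
  fixes M :: "real^'n^'n"
  assumes "invertible M"
  shows "M ** matrix_inv M = mat 1" "matrix_inv M ** M = mat 1"
  using someI_ex[OF assms[unfolded invertible_def]] unfolding matrix_inv_def by auto

lemma posdef_invertible:
  fixes M :: "real^'n^'n"
  assumes "\<forall>v. v \<noteq> 0 \<longrightarrow> v \<bullet> (M *v v) > 0"
  shows "invertible M"
  unfolding invertible_left_inverse matrix_left_invertible_ker
proof (intro allI impI)
  fix x assume "M *v x = 0"
  then show "x = 0" using assms[rule_format, of x] by (cases "x = 0") auto
qed

lemma mv2: "(M *v (v::real^2)) $ i = M$i$1 * v$1 + M$i$2 * v$2"
  by (simp add: matrix_vector_mult_def sum_2)

lemma inv2:
  fixes M :: "real^2^2"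
  assumes "invertible M"
  shows "(matrix_inv M *v v) $ 1 = (M$2$2* v$1 - M$1$2* v$2) / det M"
        "(matrix_inv M *v v) $ 2 = (M$1$1* v$2 - M$2$1* v$1) / det M"
proof -
  define u where "u = matrix_inv M *v v"
  have "M *v u = v" unfolding u_def matrix_vector_mul_assoc minv(1)[OF assms] by simp
  then have e1: "M$1$1 * u$1 + M$1$2 * u$2 = v$1" and e2: "M$2$1 * u$1 + M$2$2 * u$2 = v$2"
    by (simp_all only: mv2[symmetric])
  have d: "det M \<noteq> 0" using assms invertible_det_nz by blast
  have "u$1 * det M = M$2$2* v$1 - M$1$2* v$2" unfolding det_2 e1[symmetric] e2[symmetric] by (simp add: algebra_simps)
  moreover have "u$2 * det M = M$1$1* v$2 - M$2$1* v$1" unfolding det_2 e1[symmetric] e2[symmetric] by (simp add: algebra_simps)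
  ultimately show "(matrix_inv M *v v) $ 1 = (M$2$2* v$1 - M$1$2* v$2) / det M"
        "(matrix_inv M *v v) $ 2 = (M$1$1* v$2 - M$2$1* v$1) / det M"
    using d unfolding u_def by (auto simp: field_simps)
qed

lemma pd_has:
  assumes "f differentiable (at x)"
  shows "((\<lambda>t. f (x + t *\<^sub>R axis k 1)) has_real_derivative pd f k x) (at 0)"
proof -
  have l: "(\<lambda>t::real. x + t *\<^sub>R axis k 1) differentiable (at 0)"
  proof -
    have "((\<lambda>t::real. x + t *\<^sub>R axis k 1) has_derivative (\<lambda>t. t *\<^sub>R axis k 1)) (at 0)"
      by (auto intro!: derivative_eq_intros)
    then show ?thesis by (rule differentiableI)
  qed
  have "f differentiable (at ((\<lambda>t::real. x + t *\<^sub>R axis k 1) 0))" using assms by simp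
  from differentiable_chain_at[OF l this]
  have "(\<lambda>t. f (x + t *\<^sub>R axis k 1)) differentiable (at 0)" by (simp add: o_def)
  then show ?thesis unfolding pd_def DERIV_deriv_iff_real_differentiable[symmetric] .
qed

lemma pd_eqI:
  assumes "((\<lambda>t. f (x + t *\<^sub>R axis k 1)) has_real_derivative D) (at 0)"
  shows "pd f k x = D"
  unfolding pd_def using DERIV_imp_deriv[OF assms] .

lemma open_line:
  fixes x :: "real^2"
  assumes "open U"
  shows "open {t::real. x + t *\<^sub>R axis k 1 \<in> U}"
proof -
  have "{t::real. x + t *\<^sub>R axis k 1 \<in> U} = (\<lambda>t. x + t *\<^sub>R axis k 1) -` U" by auto
  moreover have "open ((\<lambda>t::real. x + t *\<^sub>R axis k 1) -` U)"
    by (rule continuous_open_vimage[OF assms]) (auto intro!: continuous_intros)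
  ultimately show ?thesis by simp
qed



lemma vmi:
  fixes N :: "real^'n^'n"
  assumes "invertible N" "transpose N = N" "N *v w = v"
  shows "v v* matrix_inv N = w"
proof -
  have "v = w v* N" using assms(2,3) transpose_matrix_vector[of N w] by simp
  then have "v v* matrix_inv N = w v* (N ** matrix_inv N)" by (simp add: vector_matrix_mul_assoc)
  also have "\<dots> = w" using minv(1)[OF assms(1)] by simp
  finally show ?thesis .
qed

lemma pd_sym_eq:
  assumes "open U" "x \<in> U" "\<And>y. y \<in> U \<Longrightarrow> f y = g y" "f differentiable (at x)"
  shows "pd f k x = pd g k x"
proof -
  have d: "((\<lambda>t. f (x + t *\<^sub>R axis k 1)) has_real_derivative pd f k x) (at 0)" by (rule pd_has[OF assms(4)])
  have "((\<lambda>t. g (x + t *\<^sub>R axis k 1)) has_real_derivative pd f k x) (at 0)"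
    by (rule has_field_derivative_transform_within_open[OF d open_line[OF assms(1)]]) (use assms in auto)
  then show ?thesis by (rule pd_eqI[symmetric])
qed

lemma bsq_line_deriv:
  fixes A :: "real^2 \<Rightarrow> real^2^2" and b :: "real^2 \<Rightarrow> real^2"
  assumes U: "open U" "x \<in> U"
    and pos: "\<And>y. y \<in> U \<Longrightarrow> transpose (A y) = A y \<and> (\<forall>v. v \<noteq> 0 \<longrightarrow> v \<bullet> (A y *v v) > 0)"
    and dA: "\<And>i j. (\<lambda>y. A y $ i $ j) differentiable (at x)"
    and db: "\<And>i. (\<lambda>y. b y $ i) differentiable (at x)"
  defines "bu \<equiv> matrix_inv (A x) *v b x"
  shows "((\<lambda>t. bsq A b (x + t *\<^sub>R axis k 1)) has_real_derivative
     2*(bu$1 * pd (\<lambda>y. b y$1) k x + bu$2 * pd (\<lambda>y. b y$2) k x)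
     - (bu$1*bu$1*pd (\<lambda>y. A y$1$1) k x + bu$1*bu$2*pd (\<lambda>y. A y$1$2) k x
        + bu$2*bu$1*pd (\<lambda>y. A y$2$1) k x + bu$2*bu$2*pd (\<lambda>y. A y$2$2) k x)) (at 0)"
proof -
  define l where "l = (\<lambda>t::real. x + t *\<^sub>R axis k 1)"
  define S where "S = {t::real. x + t *\<^sub>R axis k 1 \<in> U}"
  have oS: "open S" unfolding S_def by (rule open_line[OF U(1)])
  have S0: "0 \<in> S" unfolding S_def using U by simp
  have l0: "l 0 = x" unfolding l_def by simp
  define m where "m = (\<lambda>i j t. A (l t) $ i $ j)"
  define bt where "bt = (\<lambda>i t. b (l t) $ i)"
  define u where "u = (\<lambda>i t. (matrix_inv (A (l t)) *v b (l t)) $ i)"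
  have dm: "(m i j has_real_derivative pd (\<lambda>y. A y $ i $ j) k x) (at 0)" for i j
    unfolding m_def l_def by (rule pd_has[OF dA])
  have dbt: "(bt i has_real_derivative pd (\<lambda>y. b y $ i) k x) (at 0)" for i
    unfolding bt_def l_def by (rule pd_has[OF db])
  have dmd: "m i j differentiable (at 0)" for i j using dm[of i j] real_differentiable_def by blast
  have dbd: "bt i differentiable (at 0)" for i using dbt[of i] real_differentiable_def by blast
  have inv: "invertible (A (l t))" if "t \<in> S" for t
    using pos[of "l t"] that unfolding S_def l_def by (intro posdef_invertible) auto
  define dt where "dt = (\<lambda>t. m 1 1 t * m 2 2 t - m 1 2 t * m 2 1 t)"
  have dtd: "dt t = det (A (l t))" for t unfolding dt_def m_def det_2 ..
  have dt0: "dt 0 \<noteq> 0" using inv[OF S0] invertible_det_nz dtd by metis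
  define E1 where "E1 = (\<lambda>t. (m 2 2 t * bt 1 t - m 1 2 t * bt 2 t) / dt t)"
  define E2 where "E2 = (\<lambda>t. (m 1 1 t * bt 2 t - m 2 1 t * bt 1 t) / dt t)"
  have E1u: "E1 t = u 1 t" if "t \<in> S" for t
    unfolding E1_def u_def inv2(1)[OF inv[OF that]] dtd[symmetric] m_def bt_def ..
  have E2u: "E2 t = u 2 t" if "t \<in> S" for t
    unfolding E2_def u_def inv2(2)[OF inv[OF that]] dtd[symmetric] m_def bt_def ..
  have dtdiff: "dt differentiable (at 0)" unfolding dt_def
    by (intro differentiable_diff differentiable_mult dmd)
  have "E1 differentiable (at 0)" unfolding E1_def
    by (intro differentiable_divide differentiable_diff differentiable_mult dmd dbd dtdiff dt0)
  then have dE1: "(E1 has_real_derivative deriv E1 0) (at 0)" using DERIV_deriv_iff_real_differentiable by blast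
  have "E2 differentiable (at 0)" unfolding E2_def
    by (intro differentiable_divide differentiable_diff differentiable_mult dmd dbd dtdiff dt0)
  then have dE2: "(E2 has_real_derivative deriv E2 0) (at 0)" using DERIV_deriv_iff_real_differentiable by blast
  define D1 where "D1 = deriv E1 0"
  define D2 where "D2 = deriv E2 0"
  have du1: "(u 1 has_real_derivative D1) (at 0)" unfolding D1_def
    by (rule has_field_derivative_transform_within_open[OF dE1 oS S0]) (simp add: E1u)
  have du2: "(u 2 has_real_derivative D2) (at 0)" unfolding D2_def
    by (rule has_field_derivative_transform_within_open[OF dE2 oS S0]) (simp add: E2u)
  have rel: "m i 1 t * u 1 t + m i 2 t * u 2 t = bt i t" if "t \<in> S" for i t
  proof -
    have "A (l t) *v (matrix_inv (A (l t)) *v b (l t)) = b (l t)"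
      unfolding matrix_vector_mul_assoc minv(1)[OF inv[OF that]] by simp
    then have "(A (l t) *v (matrix_inv (A (l t)) *v b (l t))) $ i = b (l t) $ i" by simp
    then show ?thesis unfolding mv2 m_def u_def bt_def .
  qed
  define dA where "dA = (\<lambda>i j. pd (\<lambda>y. A y $ i $ j) k x)"
  define dB where "dB = (\<lambda>i. pd (\<lambda>y. b y $ i) k x)"
  have drel: "dA i 1 * u 1 0 + m i 1 0 * D1 + (dA i 2 * u 2 0 + m i 2 0 * D2) = dB i" for i
  proof -
    have h1: "((\<lambda>t. m i 1 t * u 1 t + m i 2 t * u 2 t) has_real_derivative
        (dA i 1 * u 1 0 + D1 * m i 1 0) + (dA i 2 * u 2 0 + D2 * m i 2 0)) (at 0)"
      unfolding dA_def by (intro DERIV_add DERIV_mult dm du1 du2)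
    have h2: "(bt i has_real_derivative (dA i 1 * u 1 0 + D1 * m i 1 0) + (dA i 2 * u 2 0 + D2 * m i 2 0)) (at 0)"
      by (rule has_field_derivative_transform_within_open[OF h1 oS S0]) (simp add: rel)
    have "(dA i 1 * u 1 0 + D1 * m i 1 0) + (dA i 2 * u 2 0 + D2 * m i 2 0) = dB i"
      using DERIV_unique[OF h2 dbt[of i]] unfolding dB_def .
    then show ?thesis by (simp add: algebra_simps)
  qed
  have bsql: "bsq A b (l t) = bt 1 t * u 1 t + bt 2 t * u 2 t" for t
    unfolding bsq_def bt_def u_def by (simp add: inner_vec_def sum_2)
  have dbsq: "((\<lambda>t. bt 1 t * u 1 t + bt 2 t * u 2 t) has_real_derivative
       (dB 1 * u 1 0 + D1 * bt 1 0) + (dB 2 * u 2 0 + D2 * bt 2 0)) (at 0)"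
    unfolding dB_def by (intro DERIV_add DERIV_mult dbt du1 du2)
  have u0: "u i 0 = bu $ i" for i unfolding u_def bu_def l0 ..
  have m0: "m i j 0 = A x $ i $ j" for i j unfolding m_def l0 ..
  have b0: "bt i 0 = b x $ i" for i unfolding bt_def l0 ..
  have msym: "A x $ 1 $ 2 = A x $ 2 $ 1"
  proof -
    have "transpose (A x) $ 1 $ 2 = A x $ 1 $ 2" using pos[OF U(2)] by simp
    then show ?thesis by (simp add: transpose_def)
  qed
  have bx: "b x $ i = A x $ i $ 1 * bu $ 1 + A x $ i $ 2 * bu $ 2" for i
    using rel[OF S0, of i] unfolding u0 m0 b0 by simp
  have eqv: "(dB 1 * u 1 0 + D1 * bt 1 0) + (dB 2 * u 2 0 + D2 * bt 2 0) =
     2*(bu$1 * dB 1 + bu$2 * dB 2)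
     - (bu$1*bu$1*dA 1 1 + bu$1*bu$2*dA 1 2 + bu$2*bu$1*dA 2 1 + bu$2*bu$2*dA 2 2)"
  proof -
    have r1: "dA 1 1 * bu$1 + A x$1$1 * D1 + (dA 1 2 * bu$2 + A x$1$2 * D2) = dB 1"
      using drel[of 1] unfolding u0 m0 .
    have r2: "dA 2 1 * bu$1 + A x$2$1 * D1 + (dA 2 2 * bu$2 + A x$2$2 * D2) = dB 2"
      using drel[of 2] unfolding u0 m0 .
    have "D1 * b x $ 1 + D2 * b x $ 2 = bu$1 * (A x$1$1 * D1 + A x$1$2 * D2) + bu$2 * (A x$2$1 * D1 + A x$2$2 * D2)"
      unfolding bx msym by (simp add: algebra_simps)
    also have "\<dots> = bu$1 * (dB 1 - dA 1 1 * bu$1 - dA 1 2 * bu$2) + bu$2 * (dB 2 - dA 2 1 * bu$1 - dA 2 2 * bu$2)"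
      unfolding r1[symmetric] r2[symmetric] by (simp add: algebra_simps)
    finally have "D1 * b x $ 1 + D2 * b x $ 2 = bu$1 * (dB 1 - dA 1 1 * bu$1 - dA 1 2 * bu$2) + bu$2 * (dB 2 - dA 2 1 * bu$1 - dA 2 2 * bu$2)" .
    then show ?thesis unfolding u0 b0 by (simp add: algebra_simps)
  qed
  show ?thesis using dbsq unfolding eqv unfolding bsql[symmetric] unfolding l_def dB_def dA_def .
qed



lemma cc:
  "(\<Sum>k\<in>UNIV. christoffel N k i j x * b x $ k) =
   (\<Sum>l\<in>UNIV. (b x v* matrix_inv (N x)) $ l *
      (pd (\<lambda>y. N y $ l $ j) i x + pd (\<lambda>y. N y $ l $ i) j x - pd (\<lambda>y. N y $ i $ j) l x)) / 2"
  unfolding christoffel_def vector_matrix_mult_def by (simp add: sum_2 field_simps)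

lemma tcomp: "tilde_metric eps A b y $ i $ j =
    xi_coef eps (bsq A b y) * A y $ i $ j + eta_coef eps (bsq A b y) * (b y $ i * b y $ j)"
  unfolding tilde_metric_def by simp

lemma tmv: "(tilde_metric eps A b y *v v) $ i =
    xi_coef eps (bsq A b y) * (A y *v v) $ i + eta_coef eps (bsq A b y) * (b y \<bullet> v) * b y $ i"
  unfolding mv2 tcomp by (simp add: inner_vec_def sum_2 algebra_simps)




lemma core_generic:
  fixes a :: "2\<Rightarrow>2\<Rightarrow>real" and u bb Bk sv :: "2\<Rightarrow>real" and da dt :: "2\<Rightarrow>2\<Rightarrow>2\<Rightarrow>real"
    and db R Rt G Gt :: "2\<Rightarrow>2\<Rightarrow>real" and xi eta xi' eta' lam B :: real
  assumes as: "\<And>i j. a i j = a j i" and das: "\<And>k i j. da k i j = da k j i"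
    and bb: "\<And>i. bb i = a i 1 * u 1 + a i 2 * u 2"
    and B: "B = u 1 * bb 1 + u 2 * bb 2"
    and lam: "lam = xi + eta * B" "lam \<noteq> 0"
    and dt: "\<And>k i j. dt k i j = xi' * Bk k * a i j + xi * da k i j + eta' * Bk k * (bb i * bb j)
               + eta * (db k i * bb j + bb i * db k j)"
    and G: "\<And>i j. G i j = (u 1 * (da i 1 j + da j 1 i - da 1 i j) + u 2 * (da i 2 j + da j 2 i - da 2 i j)) / 2"
    and Gt: "\<And>i j. Gt i j = ((u 1 / lam) * (dt i 1 j + dt j 1 i - dt 1 i j) + (u 2 / lam) * (dt i 2 j + dt j 2 i - dt 2 i j)) / 2"
    and R: "\<And>i j. R i j = ((db j i - G i j) + (db i j - G j i)) / 2"
    and Rt: "\<And>i j. Rt i j = ((db j i - Gt i j) + (db i j - Gt j i)) / 2"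
    and sv: "\<And>j. sv j = u 1 * (((db j 1 - G 1 j) - (db 1 j - G j 1)) / 2) + u 2 * (((db j 2 - G 2 j) - (db 2 j - G j 2)) / 2)"
  shows "2 * lam * Rt i j = 2 * xi * R i j - xi' * (Bk i * bb j + Bk j * bb i - (u 1 * Bk 1 + u 2 * Bk 2) * a i j)
           - eta' * (B * (Bk i * bb j + Bk j * bb i) - (u 1 * Bk 1 + u 2 * Bk 2) * (bb i * bb j))
           - 2 * eta * (sv i * bb j + sv j * bb i)"
proof -
  have Gs: "G i j = G j i" for i j unfolding G by (simp add: das algebra_simps)
  have dts: "dt k i j = dt k j i" for k i j unfolding dt by (simp add: das as algebra_simps)
  have ab: "a 1 j * u 1 + a 2 j * u 2 = bb j" for j unfolding bb by (simp add: as)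
  have sv': "2 * sv j = u 1 * (db j 1 - db 1 j) + u 2 * (db j 2 - db 2 j)" for j
    unfolding sv by (simp add: Gs field_simps)
  have sv'': "sv j = (u 1 * (db j 1 - db 1 j) + u 2 * (db j 2 - db 2 j)) / 2" for j
    using sv'[of j] by simp
  have key: "2 * lam * Gt i j = xi' * (Bk i * bb j + Bk j * bb i - (u 1 * Bk 1 + u 2 * Bk 2) * a i j)
     + 2 * xi * G i j + eta' * (B * (Bk i * bb j + Bk j * bb i) - (u 1 * Bk 1 + u 2 * Bk 2) * (bb i * bb j))
     + eta * ((u 1 * db i 1 + u 2 * db i 2) * bb j + (u 1 * db j 1 + u 2 * db j 2) * bb i + B * (db i j + db j i)
        - (u 1 * db 1 i + u 2 * db 2 i) * bb j - bb i * (u 1 * db 1 j + u 2 * db 2 j))"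
  proof -
    have "2 * lam * Gt i j = u 1 * (dt i 1 j + dt j 1 i - dt 1 i j) + u 2 * (dt i 2 j + dt j 2 i - dt 2 i j)"
      unfolding Gt using lam(2) by (simp add: field_simps)
    also have "\<dots> = xi' * (Bk i * (a 1 j * u 1 + a 2 j * u 2) + Bk j * (a 1 i * u 1 + a 2 i * u 2) - (u 1 * Bk 1 + u 2 * Bk 2) * a i j)
     + xi * (u 1 * (da i 1 j + da j 1 i - da 1 i j) + u 2 * (da i 2 j + da j 2 i - da 2 i j))
     + eta' * ((u 1 * bb 1 + u 2 * bb 2) * (Bk i * bb j + Bk j * bb i) - (u 1 * Bk 1 + u 2 * Bk 2) * (bb i * bb j))
     + eta * ((u 1 * db i 1 + u 2 * db i 2) * bb j + (u 1 * db j 1 + u 2 * db j 2) * bb i + (u 1 * bb 1 + u 2 * bb 2) * (db i j + db j i)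
        - (u 1 * db 1 i + u 2 * db 2 i) * bb j - bb i * (u 1 * db 1 j + u 2 * db 2 j))"
      unfolding dt by (simp add: as das algebra_simps)
    also have "\<dots> = xi' * (Bk i * bb j + Bk j * bb i - (u 1 * Bk 1 + u 2 * Bk 2) * a i j)
     + 2 * xi * G i j + eta' * (B * (Bk i * bb j + Bk j * bb i) - (u 1 * Bk 1 + u 2 * Bk 2) * (bb i * bb j))
     + eta * ((u 1 * db i 1 + u 2 * db i 2) * bb j + (u 1 * db j 1 + u 2 * db j 2) * bb i + B * (db i j + db j i)
        - (u 1 * db 1 i + u 2 * db 2 i) * bb j - bb i * (u 1 * db 1 j + u 2 * db 2 j))"
      unfolding ab B G by simp
    finally show ?thesis .
  qed
  have Rt': "Rt i j = (db j i + db i j) / 2 - Gt i j" unfolding Rt using Gt by (simp add: dts field_simps)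
  have R': "R i j = (db j i + db i j) / 2 - G i j" unfolding R by (simp add: Gs field_simps)
  have "2 * lam * Rt i j = lam * (db j i + db i j) - 2 * lam * Gt i j" unfolding Rt' by (simp add: algebra_simps)
  also have "\<dots> = lam * (db j i + db i j) - (xi' * (Bk i * bb j + Bk j * bb i - (u 1 * Bk 1 + u 2 * Bk 2) * a i j)
     + 2 * xi * G i j + eta' * (B * (Bk i * bb j + Bk j * bb i) - (u 1 * Bk 1 + u 2 * Bk 2) * (bb i * bb j))
     + eta * ((u 1 * db i 1 + u 2 * db i 2) * bb j + (u 1 * db j 1 + u 2 * db j 2) * bb i + B * (db i j + db j i)
        - (u 1 * db 1 i + u 2 * db 2 i) * bb j - bb i * (u 1 * db 1 j + u 2 * db 2 j)))"
    by (simp only: key)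
  also have "\<dots> = 2 * xi * R i j - xi' * (Bk i * bb j + Bk j * bb i - (u 1 * Bk 1 + u 2 * Bk 2) * a i j)
           - eta' * (B * (Bk i * bb j + Bk j * bb i) - (u 1 * Bk 1 + u 2 * Bk 2) * (bb i * bb j))
           - eta * (2 * sv i * bb j + 2 * sv j * bb i)"
    unfolding R' lam(1) sv''[of i] sv''[of j] by (simp add: field_simps)
  finally show ?thesis by (simp add: algebra_simps)
qed

lemma core_Bk:
  fixes a :: "2\<Rightarrow>2\<Rightarrow>real" and u Bk sv :: "2\<Rightarrow>real" and da :: "2\<Rightarrow>2\<Rightarrow>2\<Rightarrow>real"
    and db R G :: "2\<Rightarrow>2\<Rightarrow>real"
  assumes das: "\<And>k i j. da k i j = da k j i"
    and G: "\<And>i j. G i j = (u 1 * (da i 1 j + da j 1 i - da 1 i j) + u 2 * (da i 2 j + da j 2 i - da 2 i j)) / 2"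
    and R: "\<And>i j. R i j = ((db j i - G i j) + (db i j - G j i)) / 2"
    and sv: "\<And>j. sv j = u 1 * (((db j 1 - G 1 j) - (db 1 j - G j 1)) / 2) + u 2 * (((db j 2 - G 2 j) - (db 2 j - G j 2)) / 2)"
    and Bk: "\<And>k. Bk k = 2*(u 1 * db k 1 + u 2 * db k 2) - (u 1*u 1*da k 1 1 + u 1*u 2*da k 1 2 + u 2*u 1*da k 2 1 + u 2*u 2*da k 2 2)"
  shows "Bk k = 2 * ((u 1 * R 1 k + u 2 * R 2 k) + sv k)" "u 1 * sv 1 + u 2 * sv 2 = 0"
proof -
  have Gs: "G i j = G j i" for i j unfolding G by (simp add: das algebra_simps)
  show "Bk k = 2 * ((u 1 * R 1 k + u 2 * R 2 k) + sv k)"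
    unfolding Bk R sv G by (simp add: das field_simps)
  show "u 1 * sv 1 + u 2 * sv 2 = 0"
    unfolding sv by (simp add: Gs field_simps)
qed

lemma core_final:
  fixes a :: "2\<Rightarrow>2\<Rightarrow>real" and u bb Bk sv :: "2\<Rightarrow>real"
    and R Rt :: "2\<Rightarrow>2\<Rightarrow>real" and xi eta xi' eta' lam B tau eps c p mu :: real
  assumes bb: "\<And>i. bb i = a i 1 * u 1 + a i 2 * u 2"
    and as: "\<And>i j. a i j = a j i"
    and B: "B = u 1 * bb 1 + u 2 * bb 2"
    and lam: "lam \<noteq> 0"
    and E: "2 * lam * Rt i j = 2 * xi * R i j - xi' * (Bk i * bb j + Bk j * bb i - (u 1 * Bk 1 + u 2 * Bk 2) * a i j)
           - eta' * (B * (Bk i * bb j + Bk j * bb i) - (u 1 * Bk 1 + u 2 * Bk 2) * (bb i * bb j))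
           - 2 * eta * (sv i * bb j + sv j * bb i)"
    and Bk: "\<And>k. Bk k = 2 * ((u 1 * R 1 k + u 2 * R 2 k) + sv k)"
    and us: "u 1 * sv 1 + u 2 * sv 2 = 0"
    and H: "\<And>i j. R i j = 2 * tau * (p * a i j - 3 * eps * bb i * bb j) + c * (bb i * sv j + bb j * sv i)"
    and p: "p = 1 + 2 * eps * B"
    and f1: "xi * c - (xi' + eta' * B) * (c * B + 1) - eta = 0"
    and f2: "2 * (xi * p + (1 - eps * B) * B * xi') - mu * lam * xi = 0"
    and f3: "-12 * eps * xi - 8 * (1 - eps * B) * (xi' + eta' * B) + 4 * (1 - eps * B) * B * eta' - 2 * lam * mu * eta = 0"
  shows "Rt i j = tau * mu * (xi * a i j + eta * (bb i * bb j))"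
proof -
  have ab: "u 1 * a 1 k + u 2 * a 2 k = bb k" for k unfolding bb by (simp add: as algebra_simps)
  have rk: "u 1 * R 1 k + u 2 * R 2 k = 2 * tau * (1 - eps * B) * bb k + c * B * sv k" for k
  proof -
    have "u 1 * R 1 k + u 2 * R 2 k = 2 * tau * (p * (u 1 * a 1 k + u 2 * a 2 k) - 3 * eps * (u 1 * bb 1 + u 2 * bb 2) * bb k)
       + c * ((u 1 * bb 1 + u 2 * bb 2) * sv k + bb k * (u 1 * sv 1 + u 2 * sv 2))"
      unfolding H by (simp add: algebra_simps)
    also have "\<dots> = 2 * tau * (1 - eps * B) * bb k + c * B * sv k"
      unfolding ab B[symmetric] us p by (simp add: algebra_simps)
    finally show ?thesis .
  qed
  have Bk': "Bk k = 4 * tau * (1 - eps * B) * bb k + 2 * (c * B + 1) * sv k" for k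
    unfolding Bk rk by (simp add: algebra_simps)
  have B': "u 1 * Bk 1 + u 2 * Bk 2 = 4 * tau * (1 - eps * B) * B"
  proof -
    have "u 1 * Bk 1 + u 2 * Bk 2 = 4 * tau * (1 - eps * B) * (u 1 * bb 1 + u 2 * bb 2) + 2 * (c * B + 1) * (u 1 * sv 1 + u 2 * sv 2)"
      unfolding Bk' by (simp add: algebra_simps)
    then show ?thesis unfolding us B[symmetric] by simp
  qed
  have "2 * lam * Rt i j - 2 * lam * (tau * mu * (xi * a i j + eta * (bb i * bb j)))
     = (2 * tau * a i j) * (2 * (xi * p + (1 - eps * B) * B * xi') - mu * lam * xi)
       + (tau * bb i * bb j) * (-12 * eps * xi - 8 * (1 - eps * B) * (xi' + eta' * B) + 4 * (1 - eps * B) * B * eta' - 2 * lam * mu * eta)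
       + 2 * (bb i * sv j + bb j * sv i) * (xi * c - (xi' + eta' * B) * (c * B + 1) - eta)"
    unfolding E B' unfolding Bk' H by (simp add: algebra_simps)
  then have "2 * lam * Rt i j - 2 * lam * (tau * mu * (xi * a i j + eta * (bb i * bb j))) = 0"
    unfolding f1 f2 f3 by simp
  then show ?thesis using lam by simp
qed



lemma pow32: "0 < p \<Longrightarrow> p powr (3/2) = p * sqrt p"
proof -
  assume "0 < p"
  have "p powr (3/2) = p powr (1 + 1/2)" by simp
  also have "\<dots> = p powr 1 * p powr (1/2)" by (rule powr_add)
  also have "\<dots> = p * sqrt p" using \<open>0<p\<close> by (simp add: powr_half_sqrt)
  finally show ?thesis .
qed
lemma pow52: "0 < p \<Longrightarrow> p powr (5/2) = p^2 * sqrt p"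
proof -
  assume "0 < p"
  have "p powr (5/2) = p powr (2 + 1/2)" by simp
  also have "\<dots> = p powr 2 * p powr (1/2)" by (rule powr_add)
  also have "\<dots> = p^2 * sqrt p" using \<open>0<p\<close> by (simp add: powr_half_sqrt)
  finally show ?thesis .
qed

lemma scalar_facts:
  fixes eps B s :: real
  assumes e: "eps = 1 \<or> eps = -1" and B: "0 < B" and p: "0 < 1 + 2*eps*B" and q: "0 < 1 - eps*B"
    and s0: "0 < s" and ss: "s * s = 1 + 2*eps*B"
  defines "P \<equiv> 1 + 2*eps*B"
  defines "XI \<equiv> (1 - eps*B)^3 / (P * s)"
  defines "ETA \<equiv> 9 * (eps + B + eps * B^2) / (P * s)"
  defines "XI' \<equiv> -3 * eps * (1 - eps*B)^2 * (2 + eps*B) / (P^2 * s)"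
  defines "ETA' \<equiv> 9 * (B^2 + eps*B - 2) / (P^2 * s)"
  defines "c \<equiv> 3 / (eps - B)"
  defines "lam \<equiv> P * s"
  defines "mu \<equiv> 2 * (1 - eps*B)^2 / (P^2 * s)"
  shows "XI + ETA * B = lam"
    "XI * c - (XI' + ETA' * B) * (c * B + 1) - ETA = 0"
    "2 * (XI * P + (1 - eps * B) * B * XI') - mu * lam * XI = 0"
    "-12 * eps * XI - 8 * (1 - eps * B) * (XI' + ETA' * B) + 4 * (1 - eps * B) * B * ETA' - 2 * lam * mu * ETA = 0"
proof -
  have P0: "P \<noteq> 0" using p P_def by simp
  have sn: "s \<noteq> 0" using s0 by simp
  have em: "eps - B \<noteq> 0" using e B q by auto
  have ee: "eps * eps = 1" using e by auto
  have "XI + ETA * B = ((1 - eps*B)^3 + 9 * B * (eps + B + eps * B^2)) / (P * s)"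
    unfolding XI_def ETA_def using P0 sn by (simp add: field_simps)
  also have "(1 - eps*B)^3 + 9 * B * (eps + B + eps * B^2) = P * (s * s) * (s * s)"
    unfolding ss P_def using e by (auto simp: algebra_simps power2_eq_square power3_eq_cube)
  also have "P * (s * s) * (s * s) / (P * s) = lam" unfolding lam_def using P0 sn ss[folded P_def] by (simp add: field_simps)
  finally show "XI + ETA * B = lam" .
  show "XI * c - (XI' + ETA' * B) * (c * B + 1) - ETA = 0"
  proof -
    define D where "D = P^2 * s"
    have D0: "D \<noteq> 0" unfolding D_def using P0 sn by simp
    have x1: "XI = (1 - eps*B)^3 * P / D" unfolding XI_def D_def using P0 sn by (simp add: field_simps power2_eq_square)
    have x2: "ETA = 9 * (eps + B + eps * B^2) * P / D" unfolding ETA_def D_def using P0 sn by (simp add: field_simps power2_eq_square)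
    have x3: "XI' = -3 * eps * (1 - eps*B)^2 * (2 + eps*B) / D" unfolding XI'_def D_def ..
    have x4: "ETA' = 9 * (B^2 + eps*B - 2) / D" unfolding ETA'_def D_def ..
    have num: "3 * ((1 - eps*B)^3 * P) - (-3 * eps * (1 - eps*B)^2 * (2 + eps*B) + 9 * (B^2 + eps*B - 2) * B) * (3 * B + (eps - B))
       - 9 * (eps + B + eps * B^2) * P * (eps - B) = 0"
      using e unfolding P_def by (auto simp: algebra_simps power2_eq_square power3_eq_cube)
    have gen: "\<And>xn x'n en e'n m. m \<noteq> 0 \<Longrightarrow> 3*xn - (x'n + e'n*B)*(3*B + m) - en*m = 0 \<Longrightarrow>
        xn/D*(3/m) - (x'n/D + e'n/D*B)*(3/m*B+1) - en/D = 0"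
      using D0 by (simp add: field_simps)
    show ?thesis unfolding x1 x2 x3 x4 c_def
      by (rule gen[OF em]) (use num in \<open>simp add: algebra_simps\<close>)
  qed
  have g2: "\<And>x x' mm k. 2*(x/(P^2* s)*P + k*(x'/(P^2* s))) - mm/(P^2* s)*(P* s)*(x/(P^2* s))
       = (2*(x*P + k*x')*P - mm*x)/(P^3* s)"
    using P0 sn by (simp add: field_simps power2_eq_square power3_eq_cube)
  have g3: "\<And>x x' e e' k1 k2 k3 mm. k1 * (x/(P^2* s)) - k2 * (x'/(P^2* s) + e'/(P^2* s) * B) + k3 * (e'/(P^2* s)) - 2*(P* s)*(mm/(P^2* s))*(e/(P^2* s))
       = (P*(k1*x - k2*(x' + e'*B) + k3*e') - 2*mm*e)/(P^3* s)"
    using P0 sn by (simp add: field_simps power2_eq_square power3_eq_cube)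
  have x1: "XI = (1 - eps*B)^3 * P / (P^2* s)" unfolding XI_def using P0 sn by (simp add: field_simps power2_eq_square)
  have x2: "ETA = 9 * (eps + B + eps * B^2) * P / (P^2* s)" unfolding ETA_def using P0 sn by (simp add: field_simps power2_eq_square)
  have n2: "2*((1 - eps*B)^3 * P*P + ((1 - eps * B) * B)*(-3 * eps * (1 - eps*B)^2 * (2 + eps*B)))*P - (2 * (1 - eps*B)^2)*((1 - eps*B)^3 * P) = 0"
    using e unfolding P_def by (auto simp: algebra_simps power2_eq_square power3_eq_cube)
  have n3: "P*((-12 * eps)*((1 - eps*B)^3 * P) - (8 * (1 - eps * B))*((-3 * eps * (1 - eps*B)^2 * (2 + eps*B)) + (9 * (B^2 + eps*B - 2))*B) + (4 * (1 - eps * B) * B)*(9 * (B^2 + eps*B - 2))) - 2*(2 * (1 - eps*B)^2)*(9 * (eps + B + eps * B^2) * P) = 0"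
    using e unfolding P_def by (auto simp: algebra_simps power2_eq_square power3_eq_cube)
  show "2 * (XI * P + (1 - eps * B) * B * XI') - mu * lam * XI = 0"
    unfolding x1 XI'_def mu_def lam_def
    using g2[of "(1 - eps*B)^3 * P" "(1 - eps * B) * B" "-3 * eps * (1 - eps*B)^2 * (2 + eps*B)" "2 * (1 - eps*B)^2"] n2
    by (simp add: mult.assoc)
  show "-12 * eps * XI - 8 * (1 - eps * B) * (XI' + ETA' * B) + 4 * (1 - eps * B) * B * ETA' - 2 * lam * mu * ETA = 0"
    unfolding x1 x2 XI'_def ETA'_def mu_def lam_def
    using g3[of "-12 * eps" "(1 - eps*B)^3 * P" "8 * (1 - eps * B)" "-3 * eps * (1 - eps*B)^2 * (2 + eps*B)" "9 * (B^2 + eps*B - 2)" "4 * (1 - eps * B) * B" "2 * (1 - eps*B)^2" "9 * (eps + B + eps * B^2) * P"] n3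
    by (simp add: mult.assoc)
qed


lemma aux9: "z \<noteq> 0 \<Longrightarrow> 9/(8*z)*(8*z*N/D) = 9*N/(D::real)"
  by (cases "D=0") (simp_all add: field_simps)

lemma auxK: "P \<noteq> 0 \<Longrightarrow> s \<noteq> 0 \<Longrightarrow> (s*K)/((P* s)*(P* s)) = K/(P^2* s::real)"
  by (simp add: field_simps power2_eq_square)

lemma coef_derivs:
  fixes eps B s :: real
  assumes e: "eps = 1 \<or> eps = -1" and B: "0 < B" and p: "0 < 1 + 2*eps*B"
    and s: "s = sqrt (1 + 2*eps*B)"
  shows "(xi_coef eps has_real_derivative
      -3 * eps * (1 - eps*B)^2 * (2 + eps*B) / ((1 + 2*eps*B)^2 * s)) (at B)"
    "(eta_coef eps has_real_derivative 9 * (B^2 + eps*B - 2) / ((1 + 2*eps*B)^2 * s)) (at B)"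
    "xi_coef eps B = (1 - eps*B)^3 / ((1 + 2*eps*B) * s)"
    "eta_coef eps B = 9 * (eps + B + eps * B^2) / ((1 + 2*eps*B) * s)"
proof -
  define P where "P = 1 + 2*eps*B"
  have s0: "0 < s" using s p by simp
  have ss: "s * s = P" using s p unfolding P_def by simp
  have P0: "P \<noteq> 0" using p P_def by simp
  have ee: "eps * eps = 1" using e by auto
  have dl: "((\<lambda>z. 1 + 2*eps*z) has_real_derivative 2*eps) (at B)"
    by (rule derivative_eq_intros refl | simp)+
  have dsq: "((\<lambda>z. sqrt (1 + 2*eps*z)) has_real_derivative inverse s / 2 * (2*eps)) (at B)"
    using DERIV_chain2[OF DERIV_real_sqrt[OF p] dl] s by simp
  have dg: "((\<lambda>z. (1 + 2*eps*z) * sqrt (1 + 2*eps*z)) has_real_derivative 3*eps* s) (at B)"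
  proof -
    have "((\<lambda>z. (1 + 2*eps*z) * sqrt (1 + 2*eps*z)) has_real_derivative
        2*eps * sqrt (1 + 2*eps*B) + inverse s / 2 * (2*eps) * (1 + 2*eps*B)) (at B)"
      by (rule DERIV_mult[OF dl dsq])
    moreover have "2*eps * sqrt (1 + 2*eps*B) + inverse s / 2 * (2*eps) * (1 + 2*eps*B) = 3*eps * s"
      unfolding s[symmetric] P_def[symmetric] ss[symmetric] using s0 by (simp add: field_simps)
    ultimately show ?thesis by simp
  qed
  have df: "((\<lambda>z. (1 - eps*z)^3) has_real_derivative -3*eps*(1 - eps*B)^2) (at B)"
    by (rule derivative_eq_intros refl | simp)+
  have dn: "((\<lambda>z. 9 * (eps + z + eps * z^2)) has_real_derivative 9 * (1 + 2*eps*B)) (at B)"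
    by (rule derivative_eq_intros refl | simp add: algebra_simps)+
  have gB: "(1 + 2*eps*B) * sqrt (1 + 2*eps*B) = P * s" unfolding P_def s ..
  have gB0: "(1 + 2*eps*B) * sqrt (1 + 2*eps*B) \<noteq> 0" unfolding gB using P0 s0 by simp
  define Ob where "Ob = {z::real. 0 < z \<and> 0 < 1 + 2*eps*z}"
  have oO: "open Ob" unfolding Ob_def
    by (intro open_Collect_conj open_Collect_less continuous_intros)
  have BO: "B \<in> Ob" unfolding Ob_def using B p by simp
  have xeq: "xi_coef eps z = (1 - eps*z)^3 / ((1 + 2*eps*z) * sqrt (1 + 2*eps*z))" if "z \<in> Ob" for z
    using that unfolding Ob_def xi_coef_def by (simp add: pow32)
  have eeq: "eta_coef eps z = 9 * (eps + z + eps * z^2) / ((1 + 2*eps*z) * sqrt (1 + 2*eps*z))" if "z \<in> Ob" for z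
  proof -
    have z: "0 < z" "0 < 1 + 2*eps*z" using that unfolding Ob_def by auto
    define t where "t = sqrt (1 + 2*eps*z)"
    have t0: "0 < t" using z t_def by simp
    have tt: "t * t = 1 + 2*eps*z" using z t_def by simp
    have "eta_coef eps z = 9 / (8 * z) * ((1 + 2*eps*z) * t - (1 - 2*eps*z + 4*z^2) / ((1 + 2*eps*z) * t))"
      unfolding eta_coef_def t_def using z by (simp add: pow32)
    also have "\<dots> = 9 / (8 * z) * ((((1 + 2*eps*z) * t) * ((1 + 2*eps*z) * t) - (1 - 2*eps*z + 4*z^2)) / ((1 + 2*eps*z) * t))"
    proof -
      have gX: "\<And>X Q. X \<noteq> (0::real) \<Longrightarrow> X - Q/X = (X*X - Q)/X" by (simp add: field_simps)
      have "(1 + 2*eps*z) * t \<noteq> 0" using z t0 by simp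
      from gX[OF this] show ?thesis by simp
    qed
    also have "((1 + 2*eps*z) * t) * ((1 + 2*eps*z) * t) - (1 - 2*eps*z + 4*z^2) = 8 * z * (eps + z + eps * z^2)"
    proof -
      have "((1 + 2*eps*z) * t) * ((1 + 2*eps*z) * t) = (1 + 2*eps*z) * (t * t) * (1 + 2*eps*z)" by (simp add: algebra_simps)
      then show ?thesis unfolding tt using e by (auto simp: algebra_simps power2_eq_square)
    qed
    also have "9 / (8 * z) * (8 * z * (eps + z + eps * z^2) / ((1 + 2*eps*z) * t)) = 9 * (eps + z + eps * z^2) / ((1 + 2*eps*z) * t)"
      by (rule aux9) (use z in auto)
    finally show ?thesis unfolding t_def .
  qed
  show "xi_coef eps B = (1 - eps*B)^3 / ((1 + 2*eps*B) * s)" using xeq[OF BO] s by simp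
  show "eta_coef eps B = 9 * (eps + B + eps * B^2) / ((1 + 2*eps*B) * s)" using eeq[OF BO] s by simp
  have "((\<lambda>z. (1 - eps*z)^3 / ((1 + 2*eps*z) * sqrt (1 + 2*eps*z))) has_real_derivative
     (-3*eps*(1 - eps*B)^2 * (P * s) - (1 - eps*B)^3 * (3*eps* s)) / ((P * s) * (P * s))) (at B)"
    using DERIV_divide[OF df dg gB0] unfolding gB .
  moreover have "(-3*eps*(1 - eps*B)^2 * (P * s) - (1 - eps*B)^3 * (3*eps* s)) / ((P * s) * (P * s))
      = -3 * eps * (1 - eps*B)^2 * (2 + eps*B) / ((1 + 2*eps*B)^2 * s)"
  proof -
    have num: "-3*eps*(1 - eps*B)^2 * (P * s) - (1 - eps*B)^3 * (3*eps * s) = s * (-3 * eps * (1 - eps*B)^2 * (2 + eps*B))"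
      unfolding P_def by (simp add: algebra_simps power2_eq_square power3_eq_cube)
    then have "(-3*eps*(1 - eps*B)^2 * (P * s) - (1 - eps*B)^3 * (3*eps* s)) / ((P * s) * (P * s))
       = (s * (-3 * eps * (1 - eps*B)^2 * (2 + eps*B))) / ((P * s) * (P * s))" by (simp only: num)
    also have "\<dots> = (-3 * eps * (1 - eps*B)^2 * (2 + eps*B)) / (P^2 * s)"
      by (rule auxK[OF P0]) (use s0 in simp)
    finally show ?thesis unfolding P_def .
  qed
  ultimately show "(xi_coef eps has_real_derivative
      -3 * eps * (1 - eps*B)^2 * (2 + eps*B) / ((1 + 2*eps*B)^2 * s)) (at B)"
  proof -
    assume a1: "((\<lambda>z. (1 - eps*z)^3 / ((1 + 2*eps*z) * sqrt (1 + 2*eps*z))) has_real_derivative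
     (-3*eps*(1 - eps*B)^2 * (P * s) - (1 - eps*B)^3 * (3*eps* s)) / ((P * s) * (P * s))) (at B)"
    assume a2: "(-3*eps*(1 - eps*B)^2 * (P * s) - (1 - eps*B)^3 * (3*eps* s)) / ((P * s) * (P * s))
      = -3 * eps * (1 - eps*B)^2 * (2 + eps*B) / ((1 + 2*eps*B)^2 * s)"
    from a1 have a3: "((\<lambda>z. (1 - eps*z)^3 / ((1 + 2*eps*z) * sqrt (1 + 2*eps*z))) has_real_derivative
     -3 * eps * (1 - eps*B)^2 * (2 + eps*B) / ((1 + 2*eps*B)^2 * s)) (at B)" unfolding a2 .
    show ?thesis
      by (rule has_field_derivative_transform_within_open[OF a3 oO BO]) (simp add: xeq)
  qed
  have "((\<lambda>z. 9 * (eps + z + eps * z^2) / ((1 + 2*eps*z) * sqrt (1 + 2*eps*z))) has_real_derivative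
     (9 * (1 + 2*eps*B) * (P * s) - 9 * (eps + B + eps * B^2) * (3*eps* s)) / ((P * s) * (P * s))) (at B)"
    using DERIV_divide[OF dn dg gB0] unfolding gB .
  moreover have "(9 * (1 + 2*eps*B) * (P * s) - 9 * (eps + B + eps * B^2) * (3*eps* s)) / ((P * s) * (P * s))
      = 9 * (B^2 + eps*B - 2) / ((1 + 2*eps*B)^2 * s)"
  proof -
    have num: "9 * (1 + 2*eps*B) * (P * s) - 9 * (eps + B + eps * B^2) * (3*eps* s) = s * 9 * (B^2 + eps*B - 2)"
      unfolding P_def using e by (auto simp: algebra_simps power2_eq_square)
    then have "(9 * (1 + 2*eps*B) * (P * s) - 9 * (eps + B + eps * B^2) * (3*eps* s)) / ((P * s) * (P * s))
       = (s * (9 * (B^2 + eps*B - 2))) / ((P * s) * (P * s))" by (simp only: num mult.assoc)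
    also have "\<dots> = (9 * (B^2 + eps*B - 2)) / (P^2 * s)"
      by (rule auxK[OF P0]) (use s0 in simp)
    finally show ?thesis unfolding P_def .
  qed
  ultimately show "(eta_coef eps has_real_derivative 9 * (B^2 + eps*B - 2) / ((1 + 2*eps*B)^2 * s)) (at B)"
  proof -
    assume a1: "((\<lambda>z. 9 * (eps + z + eps * z^2) / ((1 + 2*eps*z) * sqrt (1 + 2*eps*z))) has_real_derivative
     (9 * (1 + 2*eps*B) * (P * s) - 9 * (eps + B + eps * B^2) * (3*eps* s)) / ((P * s) * (P * s))) (at B)"
    assume a2: "(9 * (1 + 2*eps*B) * (P * s) - 9 * (eps + B + eps * B^2) * (3*eps* s)) / ((P * s) * (P * s))
      = 9 * (B^2 + eps*B - 2) / ((1 + 2*eps*B)^2 * s)"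
    from a1 have a3: "((\<lambda>z. 9 * (eps + z + eps * z^2) / ((1 + 2*eps*z) * sqrt (1 + 2*eps*z))) has_real_derivative
     9 * (B^2 + eps*B - 2) / ((1 + 2*eps*B)^2 * s)) (at B)" unfolding a2 .
    show ?thesis
      by (rule has_field_derivative_transform_within_open[OF a3 oO BO]) (simp add: eeq)
  qed
qed



theorem mainTheorem15:
  fixes U :: "(real^2) set" and A :: "real^2 \<Rightarrow> real^2^2" and b :: "real^2 \<Rightarrow> real^2"
    and \<tau> :: "real^2 \<Rightarrow> real" and eps :: real
  assumes "open U"
    and "eps = 1 \<or> eps = -1"
    and "riemannian_on U A"
    and "\<forall>x\<in>U. \<forall>i. (\<lambda>y. b y $ i) differentiable (at x)"
    and "\<forall>x\<in>U. b x \<noteq> 0"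
    and "\<forall>x\<in>U. (if eps = 1 then bsq A b x < 1 else bsq A b x < 1/2)"
    and "\<forall>x\<in>U. \<forall>i j. r_tensor A b i j x =
           2 * \<tau> x * ((1 + 2 * eps * bsq A b x) * A x $ i $ j - 3 * eps * b x $ i * b x $ j)
           + 3 / (eps - bsq A b x) * (b x $ i * s_vec A b j x + b x $ j * s_vec A b i x)"
  shows "\<forall>x\<in>U.
           (\<forall>i j. r_tensor (tilde_metric eps A b) b i j x =
              2 * \<tau> x * (1 - eps * bsq A b x) ^ 2 / (1 + 2 * eps * bsq A b x) powr (5/2)
              * tilde_metric eps A b x $ i $ j)
         \<and> bsq (tilde_metric eps A b) b x = bsq A b x / (1 + 2 * eps * bsq A b x) powr (3/2)"
proof (intro ballI)
  fix x assume xU: "x \<in> U"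
  note ri = assms(3)[unfolded riemannian_on_def]
  have pos: "\<And>y. y \<in> U \<Longrightarrow> transpose (A y) = A y \<and> (\<forall>v. v \<noteq> 0 \<longrightarrow> v \<bullet> (A y *v v) > 0)"
    using ri by blast
  have dA: "\<And>i j. (\<lambda>y. A y $ i $ j) differentiable (at x)" using ri xU by blast
  have dbb: "\<And>i. (\<lambda>y. b y $ i) differentiable (at x)" using assms(4) xU by blast
  have e: "eps = 1 \<or> eps = -1" using assms(2) .
  define bu where "bu = matrix_inv (A x) *v b x"
  define B where "B = bsq A b x"
  have invA: "invertible (A x)" using pos[OF xU] posdef_invertible by blast
  have trA: "transpose (A x) = A x" using pos[OF xU] by blast
  have Mbu: "A x *v bu = b x" unfolding bu_def matrix_vector_mul_assoc minv(1)[OF invA] by simp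
  have msym: "A x $ i $ j = A x $ j $ i" for i j
  proof -
    have "transpose (A x) $ j $ i = A x $ j $ i" using trA by simp
    then show ?thesis by (simp add: transpose_def)
  qed
  have bvA: "b x v* matrix_inv (A x) = bu" by (rule vmi[OF invA trA Mbu])
  have bx: "b x $ i = A x $ i $ 1 * bu $ 1 + A x $ i $ 2 * bu $ 2" for i
  proof -
    have "(A x *v bu) $ i = b x $ i" using Mbu by simp
    then show ?thesis unfolding mv2 by simp
  qed
  have BB: "B = bu $ 1 * b x $ 1 + bu $ 2 * b x $ 2"
    unfolding B_def bsq_def bu_def by (simp add: inner_vec_def sum_2 mult.commute)
  have B0: "0 < B"
  proof -
    have "bu \<noteq> 0" using Mbu assms(5) xU by auto
    then have "0 < bu \<bullet> (A x *v bu)" using pos[OF xU] by blast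
    also have "bu \<bullet> (A x *v bu) = B" unfolding Mbu unfolding B_def bsq_def bu_def by (simp add: inner_commute)
    finally show ?thesis .
  qed
  have hb: "(if eps = 1 then B < 1 else B < 1/2)" using assms(6) xU unfolding B_def by blast
  have p: "0 < 1 + 2*eps*B" and q: "0 < 1 - eps*B" using e hb B0 by auto
  define P where "P = 1 + 2*eps*B"
  define s where "s = sqrt (1 + 2*eps*B)"
  have s0: "0 < s" unfolding s_def using p by simp
  have ss: "s * s = 1 + 2*eps*B" unfolding s_def using p by simp
  note cd = coef_derivs[OF e B0 p s_def]
  note sf = scalar_facts[OF e B0 p q s0 ss]
  define XI where "XI = (1 - eps*B)^3 / (P * s)"
  define ETA where "ETA = 9 * (eps + B + eps * B^2) / (P * s)"
  define XI' where "XI' = -3 * eps * (1 - eps*B)^2 * (2 + eps*B) / (P^2 * s)"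
  define ETA' where "ETA' = 9 * (B^2 + eps*B - 2) / (P^2 * s)"
  define c where "c = 3 / (eps - B)"
  define lam where "lam = P * s"
  define mu where "mu = 2 * (1 - eps*B)^2 / (P^2 * s)"
  have f0: "XI + ETA * B = lam" using sf(1) unfolding XI_def ETA_def lam_def P_def .
  have f1: "XI * c - (XI' + ETA' * B) * (c * B + 1) - ETA = 0"
    using sf(2) unfolding XI_def ETA_def XI'_def ETA'_def c_def P_def .
  have f2: "2 * (XI * P + (1 - eps * B) * B * XI') - mu * lam * XI = 0"
    using sf(3) unfolding XI_def XI'_def mu_def lam_def P_def .
  have f3: "-12 * eps * XI - 8 * (1 - eps * B) * (XI' + ETA' * B) + 4 * (1 - eps * B) * B * ETA' - 2 * lam * mu * ETA = 0"
    using sf(4) unfolding XI_def ETA_def XI'_def ETA'_def mu_def lam_def P_def .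
  have dxi: "(xi_coef eps has_real_derivative XI') (at B)" using cd(1) unfolding XI'_def P_def .
  have deta: "(eta_coef eps has_real_derivative ETA') (at B)" using cd(2) unfolding ETA'_def P_def .
  have xiv: "xi_coef eps B = XI" using cd(3) unfolding XI_def P_def .
  have etav: "eta_coef eps B = ETA" using cd(4) unfolding ETA_def P_def .
  have lam0: "0 < lam" unfolding lam_def P_def using p s0 by simp
  have XI0: "0 < XI" unfolding XI_def P_def using p s0 q by simp
  define da where "da = (\<lambda>k i j. pd (\<lambda>y. A y $ i $ j) k x)"
  define db where "db = (\<lambda>k i. pd (\<lambda>y. b y $ i) k x)"
  define Bk where "Bk = (\<lambda>k. 2*(bu$1 * db k 1 + bu$2 * db k 2) - (bu$1*bu$1*da k 1 1 + bu$1*bu$2*da k 1 2 + bu$2*bu$1*da k 2 1 + bu$2*bu$2*da k 2 2))"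
  have dBk: "((\<lambda>t. bsq A b (x + t *\<^sub>R axis k 1)) has_real_derivative Bk k) (at 0)" for k
    using bsq_line_deriv[OF assms(1) xU pos dA dbb, of k] unfolding bu_def[symmetric] Bk_def da_def db_def .
  have das: "da k i j = da k j i" for k i j
    unfolding da_def by (rule pd_sym_eq[OF assms(1) xU _ dA]) (use pos in \<open>auto simp: vec_eq_iff transpose_def\<close>)
  define dt where "dt = (\<lambda>k i j. pd (\<lambda>y. tilde_metric eps A b y $ i $ j) k x)"
  have dtf: "dt k i j = XI' * Bk k * A x $ i $ j + XI * da k i j + ETA' * Bk k * (b x $ i * b x $ j)
               + ETA * (db k i * b x $ j + b x $ i * db k j)" for k i j
  proof -
    have B0': "bsq A b (x + 0 *\<^sub>R axis k 1) = B" unfolding B_def by simp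
    have c1: "((\<lambda>t. xi_coef eps (bsq A b (x + t *\<^sub>R axis k 1))) has_real_derivative XI' * Bk k) (at 0)"
      using DERIV_chain2[of "xi_coef eps" XI' "\<lambda>t. bsq A b (x + t *\<^sub>R axis k 1)" 0] dxi dBk[of k] B0' by simp
    have c2: "((\<lambda>t. eta_coef eps (bsq A b (x + t *\<^sub>R axis k 1))) has_real_derivative ETA' * Bk k) (at 0)"
      using DERIV_chain2[of "eta_coef eps" ETA' "\<lambda>t. bsq A b (x + t *\<^sub>R axis k 1)" 0] deta dBk[of k] B0' by simp
    have "((\<lambda>t. tilde_metric eps A b (x + t *\<^sub>R axis k 1) $ i $ j) has_real_derivative
      (XI' * Bk k * A (x + 0 *\<^sub>R axis k 1) $ i $ j + da k i j * xi_coef eps (bsq A b (x + 0 *\<^sub>R axis k 1)))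
      + (ETA' * Bk k * (b (x + 0 *\<^sub>R axis k 1) $ i * b (x + 0 *\<^sub>R axis k 1) $ j)
         + (db k i * b (x + 0 *\<^sub>R axis k 1) $ j + db k j * b (x + 0 *\<^sub>R axis k 1) $ i) * eta_coef eps (bsq A b (x + 0 *\<^sub>R axis k 1)))) (at 0)"
      unfolding tcomp da_def db_def
      by (intro DERIV_add DERIV_mult c1 c2 pd_has dA dbb)
    then have "dt k i j = (XI' * Bk k * A (x + 0 *\<^sub>R axis k 1) $ i $ j + da k i j * xi_coef eps (bsq A b (x + 0 *\<^sub>R axis k 1)))
      + (ETA' * Bk k * (b (x + 0 *\<^sub>R axis k 1) $ i * b (x + 0 *\<^sub>R axis k 1) $ j)
         + (db k i * b (x + 0 *\<^sub>R axis k 1) $ j + db k j * b (x + 0 *\<^sub>R axis k 1) $ i) * eta_coef eps (bsq A b (x + 0 *\<^sub>R axis k 1)))"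
      unfolding dt_def by (rule pd_eqI)
    then show ?thesis unfolding B0' xiv etav by (simp add: algebra_simps)
  qed
  define At where "At = tilde_metric eps A b x"
  have Atc: "At $ i $ j = XI * A x $ i $ j + ETA * (b x $ i * b x $ j)" for i j
    unfolding At_def tcomp B_def[symmetric] xiv etav ..
  have trAt: "transpose At = At" by (simp add: vec_eq_iff transpose_def Atc msym mult.commute)
  have Atmv: "(At *v v) $ i = XI * (A x *v v) $ i + ETA * (b x \<bullet> v) * b x $ i" for v i
    unfolding At_def tmv B_def[symmetric] xiv etav ..
  have buA: "bu v* A x = b x" using transpose_matrix_vector[of "A x" bu] trA Mbu by simp
  have bub: "b x \<bullet> bu = B" unfolding B_def bsq_def bu_def ..
  have invAt: "invertible At"
    unfolding invertible_left_inverse matrix_left_invertible_ker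
  proof (intro allI impI)
    fix v assume v0: "At *v v = 0"
    have comp: "XI * (A x *v v) $ i + ETA * (b x \<bullet> v) * b x $ i = 0" for i
      using v0 Atmv[of v i] by simp
    have h1: "bu \<bullet> (A x *v v) = b x \<bullet> v" using dot_lmul_matrix[of bu "A x" v] buA by simp
    have "0 = bu $ 1 * (XI * (A x *v v) $ 1 + ETA * (b x \<bullet> v) * b x $ 1) + bu $ 2 * (XI * (A x *v v) $ 2 + ETA * (b x \<bullet> v) * b x $ 2)"
      using comp by simp
    also have "\<dots> = XI * (bu \<bullet> (A x *v v)) + ETA * (b x \<bullet> v) * (bu $ 1 * b x $ 1 + bu $ 2 * b x $ 2)"
      by (simp add: inner_vec_def sum_2 algebra_simps)
    also have "\<dots> = (b x \<bullet> v) * lam" unfolding h1 BB[symmetric] f0[symmetric] by (simp add: algebra_simps)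
    finally have "b x \<bullet> v = 0" using lam0 by simp
    then have "(A x *v v) $ i = 0" for i using comp[of i] XI0 by simp
    then have "A x *v v = 0" by (simp add: vec_eq_iff)
    then show "v = 0" using pos[OF xU] by (metis inner_zero_right less_irrefl)
  qed
  have wt: "b x v* matrix_inv At = (1/lam) *\<^sub>R bu"
  proof (rule vmi[OF invAt trAt])
    show "At *v ((1/lam) *\<^sub>R bu) = b x"
    proof (subst vec_eq_iff, intro allI)
      fix i
      have "(At *v ((1/lam) *\<^sub>R bu)) $ i = (1/lam) * (XI * b x $ i + ETA * B * b x $ i)"
        unfolding matrix_vector_mult_scaleR vector_scaleR_component unfolding Atmv Mbu by (simp add: bub algebra_simps)
      also have "\<dots> = (1/lam) * ((XI + ETA * B) * b x $ i)" by (simp add: algebra_simps)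
      also have "\<dots> = b x $ i" unfolding f0 using lam0 by simp
      finally show "(At *v ((1/lam) *\<^sub>R bu)) $ i = b x $ i" .
    qed
  qed
  define a where "a = (\<lambda>i j. A x $ i $ j)"
  define u where "u = (\<lambda>i. bu $ i)"
  define bb where "bb = (\<lambda>i. b x $ i)"
  define G where "G = (\<lambda>i j. (u 1 * (da i 1 j + da j 1 i - da 1 i j) + u 2 * (da i 2 j + da j 2 i - da 2 i j)) / 2)"
  define Gt where "Gt = (\<lambda>i j. ((u 1 / lam) * (dt i 1 j + dt j 1 i - dt 1 i j) + (u 2 / lam) * (dt i 2 j + dt j 2 i - dt 2 i j)) / 2)"
  define R where "R = (\<lambda>i j. ((db j i - G i j) + (db i j - G j i)) / 2)"
  define Rt where "Rt = (\<lambda>i j. ((db j i - Gt i j) + (db i j - Gt j i)) / 2)"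
  define sv where "sv = (\<lambda>j. u 1 * (((db j 1 - G 1 j) - (db 1 j - G j 1)) / 2) + u 2 * (((db j 2 - G 2 j) - (db 2 j - G j 2)) / 2))"
  have covA: "covd A b i j x = db j i - G i j" for i j
    unfolding covd_def cc bvA G_def u_def da_def db_def by (simp add: sum_2)
  have rA: "r_tensor A b i j x = R i j" for i j unfolding r_tensor_def covA R_def ..
  have svA: "s_vec A b j x = sv j" for j
    unfolding s_vec_def b_up_def s_tensor_def covA bu_def[symmetric] sv_def u_def by (simp add: sum_2)
  have covAt: "covd (tilde_metric eps A b) b i j x = db j i - Gt i j" for i j
    unfolding covd_def cc At_def[symmetric] wt Gt_def u_def dt_def db_def by (simp add: sum_2)
  have rAt: "r_tensor (tilde_metric eps A b) b i j x = Rt i j" for i j unfolding r_tensor_def covAt Rt_def ..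
  have H: "R i j = 2 * \<tau> x * (P * a i j - 3 * eps * bb i * bb j) + c * (bb i * sv j + bb j * sv i)" for i j
  proof -
    have "\<forall>i j. r_tensor A b i j x =
           2 * \<tau> x * ((1 + 2 * eps * bsq A b x) * A x $ i $ j - 3 * eps * b x $ i * b x $ j)
           + 3 / (eps - bsq A b x) * (b x $ i * s_vec A b j x + b x $ j * s_vec A b i x)"
      using assms(7) xU by blast
    note h = this[unfolded rA svA B_def[symmetric]]
    show ?thesis unfolding c_def P_def a_def bb_def using h by blast
  qed
  have E: "2 * lam * Rt i j = 2 * XI * R i j - XI' * (Bk i * bb j + Bk j * bb i - (u 1 * Bk 1 + u 2 * Bk 2) * a i j)
           - ETA' * (B * (Bk i * bb j + Bk j * bb i) - (u 1 * Bk 1 + u 2 * Bk 2) * (bb i * bb j))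
           - 2 * ETA * (sv i * bb j + sv j * bb i)" for i j
    by (rule core_generic[where a=a and da=da and bb=bb and u=u and B=B and lam=lam and xi=XI and eta=ETA
        and dt=dt and xi'=XI' and Bk=Bk and eta'=ETA' and db=db and G=G and Gt=Gt and R=R and Rt=Rt and sv=sv])
       (use msym das bx BB f0 lam0 dtf in \<open>simp_all add: a_def bb_def u_def G_def Gt_def R_def Rt_def sv_def\<close>)
  have Bkr: "Bk k = 2 * ((u 1 * R 1 k + u 2 * R 2 k) + sv k)" "u 1 * sv 1 + u 2 * sv 2 = 0" for k
    by (rule core_Bk[where da=da and u=u and G=G and R=R and db=db and sv=sv and Bk=Bk],
        (use das in \<open>simp_all add: G_def R_def sv_def Bk_def u_def field_simps\<close>))+
  have Rt: "Rt i j = \<tau> x * mu * (XI * a i j + ETA * (bb i * bb j))" for i j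
    by (rule core_final[where a=a and u=u and bb=bb and Bk=Bk and sv=sv and R=R and Rt=Rt and xi=XI and eta=ETA
        and xi'=XI' and eta'=ETA' and lam=lam and B=B and tau="\<tau> x" and eps=eps and c=c and p=P and mu=mu])
       (use msym bx BB lam0 E Bkr H f1 f2 f3 in \<open>simp_all add: a_def bb_def u_def P_def\<close>)
  have P0: "0 < P" unfolding P_def using p .
  have sP: "s = sqrt P" unfolding s_def P_def ..
  show "(\<forall>i j. r_tensor (tilde_metric eps A b) b i j x =
              2 * \<tau> x * (1 - eps * bsq A b x) ^ 2 / (1 + 2 * eps * bsq A b x) powr (5/2)
              * tilde_metric eps A b x $ i $ j)
         \<and> bsq (tilde_metric eps A b) b x = bsq A b x / (1 + 2 * eps * bsq A b x) powr (3/2)"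
  proof -
    have p52: "P powr (5/2) = P^2 * s" using pow52[OF P0] sP by simp
    have p32: "P powr (3/2) = P * s" using pow32[OF P0] sP by simp
    have r: "r_tensor (tilde_metric eps A b) b i j x =
              2 * \<tau> x * (1 - eps * B) ^ 2 / P powr (5/2) * tilde_metric eps A b x $ i $ j" for i j
    proof -
      have "r_tensor (tilde_metric eps A b) b i j x = \<tau> x * mu * At $ i $ j"
        unfolding rAt Rt Atc a_def bb_def ..
      then show ?thesis unfolding p52 mu_def At_def by simp
    qed
    have "bsq (tilde_metric eps A b) b x = (b x v* matrix_inv At) \<bullet> b x"
      unfolding bsq_def At_def[symmetric] dot_lmul_matrix by (simp add: inner_commute)
    also have "\<dots> = B / lam" unfolding wt using bub by (simp add: inner_commute)
    finally have q: "bsq (tilde_metric eps A b) b x = B / P powr (3/2)" unfolding p32 lam_def .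
    show ?thesis using r q unfolding B_def P_def by blast
  qed
qed


end
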